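(* Let $a, w \in \mathbb{R}$ with $w < -|a|$, and let $\tau_c(a,w) := \frac{1}{\sqrt{w^2-a^2}}\arccos(a/w)$. Then $\tau_c(a,w) > 1$ if and only if $a > -1$ and $-R(-a) < w$.
   Context: $\arccos:[-1,1]\to[0,\pi]$. $C(\theta) := \theta\cot\theta$ for $\theta\in(0,\pi)$ is a strictly decreasing bijection from $(0,\pi)$ onto $(-\infty,1)$ with inverse $C^{-1}$; $R(r) := C^{-1}(r)/\sin C^{-1}(r)$ for $r<1$. *)

theory Defs
  imports Complex_Main
begin

definition C_fun :: "real \<Rightarrow> real" where
  "C_fun \<theta> = \<theta> * cot \<theta>"

text \<open>Inverse of C restricted to (0, pi); meaningful for r < 1.\<close>
definition C_inv :: "real \<Rightarrow> real" where
  "C_inv r = (THE \<theta>. 0 < \<theta> \<and> \<theta> < pi \<and> C_fun \<theta> = r)"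

definition R_fun :: "real \<Rightarrow> real" where
  "R_fun r = C_inv r / sin (C_inv r)"

definition tau_c :: "real \<Rightarrow> real \<Rightarrow> real" where
  "tau_c a w = arccos (a / w) / sqrt (w\<^sup>2 - a\<^sup>2)"

end

theory Submission
  imports Defs
begin

lemma sin_lt_x: "0 < (x::real) \<Longrightarrow> sin x < x"
proof (cases "x < 2")
  case True
  assume x: "0 < x"
  have "cos (x/2) < cos 0" using x True pi_ge_two by (intro cos_monotone_0_pi) auto
  moreover have "sin (x/2) > 0" using x True pi_ge_two by (intro sin_gt_zero) auto
  moreover have "sin x = 2 * sin (x/2) * cos (x/2)" using sin_double[of "x/2"] by simp
  moreover have "sin (x/2) \<le> x/2" using x sin_x_le_x[of "x/2"] by simp
  ultimately have "sin x < 2 * sin (x/2)" by (simp add: mult_strict_left_mono)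
  also have "\<dots> \<le> x" using \<open>sin (x/2) \<le> x/2\<close> by simp
  finally show ?thesis .
next
  case False
  then show ?thesis using sin_le_one[of x] by linarith
qed

lemma cot_strict: assumes "0 < x" "x < y" "y < pi" shows "cot y < cot x"
proof -
  have sx: "sin x > 0" "sin y > 0" using assms by (auto intro!: sin_gt_zero)
  have "sin (y - x) > 0" using assms by (intro sin_gt_zero) auto
  hence "cos y * sin x < cos x * sin y" by (simp add: sin_diff algebra_simps)
  thus ?thesis using sx by (simp add: cot_def divide_simps)
qed

lemma C_strict: assumes "0 < x" "x < y" "y < pi" shows "C_fun y < C_fun x"
proof -
  have "C_fun x > C_fun y"
  proof (rule DERIV_neg_imp_decreasing[OF assms(2)])
    fix t assume t: "x \<le> t" "t \<le> y"
    hence t0: "0 < t" "t < pi" using assms by auto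
    hence st: "sin t > 0" by (intro sin_gt_zero)
    have D: "DERIV C_fun t :> cot t + t * (-inverse ((sin t)\<^sup>2))"
      unfolding C_fun_def[abs_def] using st by (auto intro!: derivative_eq_intros DERIV_cot)
    have "sin (2*t) < 2*t" using t0 by (intro sin_lt_x) auto
    hence "sin t * cos t < t" by (simp add: sin_double)
    hence "cot t + t * (-inverse ((sin t)\<^sup>2)) < 0"
      using st by (simp add: cot_def field_simps power2_eq_square)
    thus "\<exists>d. DERIV C_fun t :> d \<and> d < 0" using D by blast
  qed
  thus ?thesis .
qed

lemma C_lt1: assumes "0 < t" "t < pi" shows "C_fun t < 1"
proof -
  let ?g = "\<lambda>u. sin u - u * cos u"
  have "?g 0 < ?g t"
  proof (rule DERIV_pos_imp_increasing_open[OF assms(1)])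
    fix u assume u: "0 < u" "u < t"
    have "DERIV ?g u :> cos u - (cos u + u * (- sin u))" by (auto intro!: derivative_eq_intros)
    moreover have "sin u > 0" using u assms by (intro sin_gt_zero) auto
    ultimately show "\<exists>d. DERIV ?g u :> d \<and> 0 < d" using u by (intro exI[of _ "u * sin u"]) (auto simp: algebra_simps)
  next
    show "continuous_on {0..t} ?g" by (intro continuous_intros)
  qed
  moreover have "sin t > 0" using assms by (intro sin_gt_zero)
  ultimately show ?thesis by (simp add: C_fun_def cot_def field_simps)
qed

lemma C_exists: assumes "r < 1" shows "\<exists>t. 0 < t \<and> t < pi \<and> C_fun t = r"
proof -
  define t0 where "t0 = arccos (max r 0)"
  have t0: "0 < t0" "t0 \<le> pi/2" "cos t0 = max r 0" unfolding t0_def using assms arccos_lt_bounded[of "max r 0"] arccos_le_pi2[of "max r 0"]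
    by auto
  have "sin t0 \<le> t0" using t0 sin_x_le_x by simp
  moreover have "sin t0 > 0" using t0 pi_ge_two by (intro sin_gt_zero) auto
  moreover have "cos t0 \<ge> 0" using t0 by simp
  ultimately have "C_fun t0 \<ge> cos t0"
    by (simp add: C_fun_def cot_def field_simps) (metis mult.commute mult_left_mono)
  hence c0: "C_fun t0 \<ge> r" using t0 by simp
  define M where "M = max 0 (-r)"
  define t1 where "t1 = pi/2 + arctan M"
  have M: "M \<ge> 0" by (simp add: M_def)
  have at: "0 \<le> arctan M" "arctan M < pi/2" using M arctan_ubound by auto
  have t1: "pi/2 \<le> t1" "t1 < pi" using at by (auto simp: t1_def)
  have "cot t1 = - tan (arctan M)" unfolding t1_def cot_def tan_def by (simp add: cos_add sin_add)
  hence ct: "cot t1 = - M" by (simp add: tan_arctan)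
  have "C_fun t1 = - t1 * M" by (simp add: C_fun_def ct)
  also have "\<dots> \<le> - M" using t1 M pi_ge_two mult_right_mono[of 1 t1 M] by simp
  also have "\<dots> \<le> r" by (simp add: M_def)
  finally have c1: "C_fun t1 \<le> r" .
  have "\<exists>t. t0 \<le> t \<and> t \<le> t1 \<and> C_fun t = r"
  proof (rule IVT2[where f=C_fun and a=t0 and b=t1, OF c1 c0])
    show "t0 \<le> t1" using t0 t1 by simp
    show "\<forall>t. t0 \<le> t \<and> t \<le> t1 \<longrightarrow> isCont C_fun t"
    proof (intro allI impI)
      fix t assume "t0 \<le> t \<and> t \<le> t1"
      hence "sin t > 0" using t0 t1 by (intro sin_gt_zero) auto
      thus "isCont C_fun t" unfolding C_fun_def[abs_def] by (intro continuous_intros) auto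
    qed
  qed
  then obtain t where "t0 \<le> t" "t \<le> t1" "C_fun t = r" by blast
  thus ?thesis using t0 t1 by (intro exI[of _ t]) auto
qed

lemma C_inv: assumes "r < 1" shows "0 < C_inv r" "C_inv r < pi" "C_fun (C_inv r) = r"
proof -
  have ex1: "\<exists>!t. 0 < t \<and> t < pi \<and> C_fun t = r"
  proof (rule ex_ex1I)
    show "\<exists>t. 0 < t \<and> t < pi \<and> C_fun t = r" using C_exists[OF assms] .
  next
    fix x y assume "0 < x \<and> x < pi \<and> C_fun x = r" "0 < y \<and> y < pi \<and> C_fun y = r"
    thus "x = y" using C_strict[of x y] C_strict[of y x] by (cases x y rule: linorder_cases) auto
  qed
  from theI'[OF ex1] show "0 < C_inv r" "C_inv r < pi" "C_fun (C_inv r) = r"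
    unfolding C_inv_def by auto
qed


lemma R_iff: assumes "r < 1" "y > 0" "s > 0" "s\<^sup>2 = y\<^sup>2 + r\<^sup>2"
  shows "s < R_fun r \<longleftrightarrow> y < C_inv r"
proof -
  define p where "p = C_inv r"
  have p: "0 < p" "p < pi" "C_fun p = r" using C_inv[OF assms(1)] by (auto simp: p_def)
  have sp: "sin p > 0" using p by (intro sin_gt_zero)
  have eq: "(p / sin p)\<^sup>2 = p\<^sup>2 + r\<^sup>2"
  proof -
    have "r = p * cos p / sin p" using p(3) by (simp add: C_fun_def cot_def)
    hence "p\<^sup>2 + r\<^sup>2 = p\<^sup>2 + p\<^sup>2 * (cos p)\<^sup>2 / (sin p)\<^sup>2"
      by (simp add: power_divide power_mult_distrib)
    also have "\<dots> = p\<^sup>2 / (sin p)\<^sup>2"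
      using sp by (simp add: field_simps) (metis distrib_left mult_1_right sin_cos_squared_add add.commute)
    finally show ?thesis by (simp add: power_divide)
  qed
  have pos: "p / sin p > 0" using p sp by simp
  have "s < p / sin p \<longleftrightarrow> s\<^sup>2 < (p / sin p)\<^sup>2"
    using pos assms(3) by (metis power_less_imp_less_base power_strict_mono less_imp_le zero_less_numeral zero_less_two
         pos2 order_less_imp_le)
  also have "\<dots> \<longleftrightarrow> y\<^sup>2 < p\<^sup>2" using eq assms(4) by simp
  also have "\<dots> \<longleftrightarrow> y < p" using assms(2) p(1)
    by (metis power_less_imp_less_base power_strict_mono less_imp_le pos2)
  finally show ?thesis by (simp add: R_fun_def p_def)
qed

theorem mainTheorem8:
  fixes a w :: real
  assumes "w < - \<bar>a\<bar>"
  shows "tau_c a w > 1 \<longleftrightarrow> (a > -1 \<and> - R_fun (- a) < w)"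
proof -
  define x where "x = a / w"
  have w0: "w < 0" using assms by linarith
  have x1: "-1 < x" "x < 1" using assms w0 by (auto simp: x_def divide_simps split: abs_split)
  define th where "th = arccos x"
  have th: "0 < th" "th < pi" using arccos_lt_bounded[OF x1] by (auto simp: th_def)
  have cth: "cos th = x" using x1 by (simp add: th_def)
  have sth: "sin th > 0" using th by (intro sin_gt_zero)
  define y where "y = sqrt (w\<^sup>2 - a\<^sup>2)"
  have "(- w * sin th)\<^sup>2 = w\<^sup>2 - a\<^sup>2"
  proof -
    have "(sin th)\<^sup>2 = 1 - x\<^sup>2" using sin_cos_squared_add[of th] cth by simp
    thus ?thesis using w0 by (simp add: power_mult_distrib x_def field_simps power2_eq_square)
  qed
  hence yeq: "y = - w * sin th" using w0 sth unfolding y_def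
    by (metis mult_pos_pos neg_0_less_iff_less real_sqrt_abs abs_of_pos)
  have y0: "y > 0" using yeq w0 sth by (simp add: mult_neg_pos)
  have tau: "tau_c a w = th / y" by (simp add: tau_c_def th_def x_def y_def)
  have tau_iff: "tau_c a w > 1 \<longleftrightarrow> y < th" using y0 unfolding tau by (simp add: less_divide_eq)
  have r: "- a = y * cot th" using yeq sth w0 cth by (simp add: cot_def x_def field_simps)
  have s2: "(- w)\<^sup>2 = y\<^sup>2 + (- a)\<^sup>2"
    using \<open>(- w * sin th)\<^sup>2 = w\<^sup>2 - a\<^sup>2\<close> yeq by simp
  show ?thesis
  proof
    assume "tau_c a w > 1"
    hence yt: "y < th" using tau_iff by simp
    have "cot th < cot y" using y0 yt th by (intro cot_strict)
    hence "-a < C_fun y" using r y0 by (simp add: C_fun_def)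
    moreover have "C_fun y < 1" using y0 yt th by (intro C_lt1) auto
    ultimately have r1: "-a < 1" by simp
    have "C_fun (C_inv (-a)) = -a" "0 < C_inv (-a)" "C_inv (-a) < pi" using C_inv[OF r1] by auto
    hence "y < C_inv (-a)" using C_strict[of "C_inv (-a)" y] \<open>-a < C_fun y\<close> y0 yt th
      by (cases "y < C_inv (-a)") (auto simp: not_less le_less)
    hence "- w < R_fun (-a)" using R_iff[OF r1 y0 _ s2] w0 by simp
    thus "a > -1 \<and> - R_fun (- a) < w" using r1 by simp
  next
    assume h: "a > -1 \<and> - R_fun (- a) < w"
    hence r1: "-a < 1" by simp
    have "- w < R_fun (-a)" using h by simp
    hence yp: "y < C_inv (-a)" using R_iff[OF r1 y0 _ s2] w0 by simp
    have p: "C_fun (C_inv (-a)) = -a" "0 < C_inv (-a)" "C_inv (-a) < pi" using C_inv[OF r1] by auto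
    have "C_fun (C_inv (-a)) < C_fun y" using C_strict[of y "C_inv (-a)"] y0 yp p by simp
    hence "y * cot th < y * cot y" using p r by (simp add: C_fun_def)
    hence ct: "cot th < cot y" using y0 by simp
    have "y < th"
    proof (rule ccontr)
      assume "\<not> y < th"
      hence "th \<le> y" by simp
      thus False using cot_strict[of th y] th ct yp p by (cases "th = y") auto
    qed
    thus "tau_c a w > 1" using tau_iff by simp
  qed
qed

end
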